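(* Let $(S(t),E(t),I(t),R(t))$ be a solution of the SEIR initial value problem described in the context such that $S(t)>0$, $E(t)>0$ and $I(t)>0$ for $t>0$. Then the limit $R(\infty)=\lim_{t\to\infty}R(t)$ exists, and, writing $a:=e^{-(\beta/\gamma)R(\infty)}$ and $u_0:=e^{-(\beta/\gamma)\tilde R}$, there is a function $\psi$, continuous and positive on $(a,u_0]$ and $C^1$ on $(a,u_0)$, satisfying the Abel differential equation of the second kind \[ \psi'\psi-\frac{\gamma+\delta}{u}\psi=-\delta\,\frac{\beta N-\beta\tilde S e^{(\beta/\gamma)\tilde R}u+\gamma\log u}{u},\qquad u\in(a,u_0), \] together with $\psi(u_0)=\beta\tilde I$ and $\lim_{u\to a+0}\psi(u)=0$, such that, with \[ t=\varphi(u)=\int_u^{u_0}\frac{d\xi}{\xi\psi(\xi)}, \] the solution has the parametric representation, for $a<u\le u_0$, \[ S(\varphi(u))=\tilde S e^{(\beta/\gamma)\tilde R}u,\qquad E(\varphi(u))=\tilde E e^{-\delta\varphi(u)}+\tilde S e^{(\beta/\gamma)\tilde R}e^{-\delta\varphi(u)}\int_u^{u_0}e^{\delta\varphi(v)}dv, \] \[ I(\varphi(u))=N-\tilde S e^{(\beta/\gamma)\tilde R}u+\frac{\gamma}{\beta}\log u-\tilde E e^{-\delta\varphi(u)}-\tilde S e^{(\beta/\gamma)\tilde R}e^{-\delta\varphi(u)}\int_u^{u_0}e^{\delta\varphi(v)}dv,\qquad R(\varphi(u))=-\frac{\gamma}{\beta}\log u . \]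
   Context: Let $\beta,\gamma,\delta>0$ be constants and $\tilde S,\tilde E,\tilde I,\tilde R$ real numbers with $N:=\tilde S+\tilde E+\tilde I+\tilde R>0$. The SEIR initial value problem is $S'(t)=-\beta S(t)I(t)$, $E'(t)=\beta S(t)I(t)-\delta E(t)$, $I'(t)=\delta E(t)-\gamma I(t)$, $R'(t)=\gamma I(t)$ for $t>0$, with $S(0)=\tilde S$, $E(0)=\tilde E$, $I(0)=\tilde I$, $R(0)=\tilde R$; a solution is a vector function $(S,E,I,R)$ of class $C^1(0,\infty)\cap C[0,\infty)$ satisfying these. Standing assumptions: (A1) $\tilde I>0$; (A2) $\tilde E>(\gamma/\delta)\tilde I$; (A3) $\tilde S>\delta\tilde E/(\beta\tilde I)$; (A4) $\tilde R\ge 0$ and $N>\tilde S e^{(\beta/\gamma)\tilde R}+\tilde R$. *)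

theory Defs
  imports "HOL-Analysis.Analysis"
begin

end

theory Submission
  imports Defs
begin
lemma mvt0:
  fixes f f' :: "real \<Rightarrow> real"
  assumes c: "continuous_on {0..} f" and d: "\<And>t. t > 0 \<Longrightarrow> (f has_real_derivative f' t) (at t)"
    and s: "0 \<le> s" "s < t"
  shows "\<exists>z. s < z \<and> z < t \<and> f t - f s = (t - s) * f' z"
proof -
  have "continuous_on {s..t} f" by (rule continuous_on_subset[OF c]) (use s in auto)
  moreover have "\<And>x. s < x \<Longrightarrow> x < t \<Longrightarrow> f differentiable (at x)"
    using d s by (meson le_less_trans real_differentiable_def)
  ultimately obtain l z where z: "s < z" "z < t" "DERIV f z :> l" "f t - f s = (t - s) * l"
    using MVT[OF s(2)] by blast
  have "l = f' z" using DERIV_unique[OF z(3) d[of z]] z s by linarith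
  thus ?thesis using z by blast
qed

lemma cont_left_open:
  fixes g :: "real \<Rightarrow> real"
  assumes "\<And>c. a < c \<Longrightarrow> c \<le> b \<Longrightarrow> continuous_on {c..b} g"
  shows "continuous_on {a<..b} g"
proof -
  have "continuous (at x within {a<..b}) g" if x: "x \<in> {a<..b}" for x
  proof -
    define c where "c = (a + x) / 2"
    have c: "a < c" "c < x" "c \<le> b" using x by (auto simp: c_def)
    have "at x within {a<..b} = at x within {c..b}"
      by (rule at_within_nhd[of _ "{c<..}"]) (use c x in auto)
    moreover have "continuous (at x within {c..b}) g"
      using assms[OF c(1) c(3)] c x by (simp add: continuous_on_eq_continuous_within)
    ultimately show ?thesis by simp
  qed
  thus ?thesis by (simp add: continuous_on_eq_continuous_within)
qed

theorem theorem1: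
  fixes \<beta> \<gamma> \<delta> S0 E0 I0 R0 N :: real
    and S E I R :: "real \<Rightarrow> real"
  defines "N \<equiv> S0 + E0 + I0 + R0"
  assumes params: "\<beta> > 0" "\<gamma> > 0" "\<delta> > 0"
    and Npos: "N > 0"
    and A1: "I0 > 0"
    and A2: "E0 > (\<gamma> / \<delta>) * I0"
    and A3: "S0 > \<delta> * E0 / (\<beta> * I0)"
    and A4: "R0 \<ge> 0" "N > S0 * exp ((\<beta> / \<gamma>) * R0) + R0"
    and cont: "continuous_on {0..} S" "continuous_on {0..} E"
              "continuous_on {0..} I" "continuous_on {0..} R"
    and dS: "\<And>t. t > 0 \<Longrightarrow> (S has_real_derivative (- \<beta> * S t * I t)) (at t)"
    and dE: "\<And>t. t > 0 \<Longrightarrow> (E has_real_derivative (\<beta> * S t * I t - \<delta> * E t)) (at t)"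
    and dI: "\<And>t. t > 0 \<Longrightarrow> (I has_real_derivative (\<delta> * E t - \<gamma> * I t)) (at t)"
    and dR: "\<And>t. t > 0 \<Longrightarrow> (R has_real_derivative (\<gamma> * I t)) (at t)"
    and init: "S 0 = S0" "E 0 = E0" "I 0 = I0" "R 0 = R0"
    and pos: "\<And>t. t > 0 \<Longrightarrow> S t > 0 \<and> E t > 0 \<and> I t > 0"
  shows "\<exists>Rinf. (R \<longlongrightarrow> Rinf) at_top \<and>
    (let a = exp (- (\<beta> / \<gamma>) * Rinf); u0 = exp (- (\<beta> / \<gamma>) * R0);
         K = S0 * exp ((\<beta> / \<gamma>) * R0) in
     \<exists>\<psi> \<psi>'.
       continuous_on {a<..u0} \<psi> \<and> (\<forall>u\<in>{a<..u0}. \<psi> u > 0) \<and>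
       (\<forall>u\<in>{a<..<u0}. (\<psi> has_real_derivative \<psi>' u) (at u)) \<and>
       continuous_on {a<..<u0} \<psi>' \<and>
       (\<forall>u\<in>{a<..<u0}. \<psi>' u * \<psi> u - ((\<gamma> + \<delta>) / u) * \<psi> u
            = - \<delta> * ((\<beta> * N - \<beta> * K * u + \<gamma> * ln u) / u)) \<and>
       \<psi> u0 = \<beta> * I0 \<and>
       (\<psi> \<longlongrightarrow> 0) (at_right a) \<and>
       (let \<phi> = (\<lambda>u. integral {u..u0} (\<lambda>\<xi>. 1 / (\<xi> * \<psi> \<xi>))) in
        \<forall>u\<in>{a<..u0}.
          S (\<phi> u) = K * u \<and>
          E (\<phi> u) = E0 * exp (- \<delta> * \<phi> u)
                     + K * exp (- \<delta> * \<phi> u) * integral {u..u0} (\<lambda>v. exp (\<delta> * \<phi> v)) \<and>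
          I (\<phi> u) = N - K * u + (\<gamma> / \<beta>) * ln u - E0 * exp (- \<delta> * \<phi> u)
                     - K * exp (- \<delta> * \<phi> u) * integral {u..u0} (\<lambda>v. exp (\<delta> * \<phi> v)) \<and>
          R (\<phi> u) = - (\<gamma> / \<beta>) * ln u))"
proof -
  have bp: "\<beta> > 0" and gp: "\<gamma> > 0" and dp: "\<delta> > 0" using params by auto
  have E0p: "E0 > 0" using A2 A1 gp dp by (smt (verit) divide_pos_pos mult_pos_pos)
  have S0p: "S0 > 0"
  proof -
    have "\<delta> * E0 / (\<beta> * I0) > 0" using E0p dp bp A1 by simp
    thus ?thesis using A3 by linarith
  qed
  define F where "F t = S t + E t + I t + R t" for t
  have cF: "continuous_on {0..} F" unfolding F_def using cont by (intro continuous_on_add) auto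
  have dF: "(F has_real_derivative 0) (at t)" if "t > 0" for t
  proof -
    have "(F has_real_derivative ((- \<beta> * S t * I t) + (\<beta> * S t * I t - \<delta> * E t) + (\<delta> * E t - \<gamma> * I t) + \<gamma> * I t)) (at t)"
      unfolding F_def[abs_def] using dS[OF that] dE[OF that] dI[OF that] dR[OF that]
      by (intro derivative_intros) auto
    thus ?thesis by simp
  qed
  have Fc: "F t = N" if "t \<ge> 0" for t
  proof (cases "t = 0")
    case True thus ?thesis using init by (simp add: F_def N_def)
  next
    case False
    hence "F t = F 0" using mvt0[OF cF dF, of 0 t] that by auto
    thus ?thesis using init by (simp add: F_def N_def)
  qed
  have Rmono: "R s < R t" if st: "0 \<le> s" "s < t" for s t
  proof -
    obtain z where z: "s < z" "z < t" "R t - R s = (t - s) * (\<gamma> * I z)"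
      using mvt0[OF cont(4) dR st] by blast
    have "I z > 0" using pos[of z] z that by auto
    hence "(t - s) * (\<gamma> * I z) > 0" using gp st by simp
    thus ?thesis using z by linarith
  qed
  have Rge: "R t \<ge> R0" if "t \<ge> 0" for t
    using Rmono[of 0 t] that init by (cases "t = 0") auto
  have Rle: "R t < N" if "t > 0" for t
    using Fc[of t] pos[OF that] that by (simp add: F_def)
  have Ebd: "E t < N" "I t < N" if "t > 0" for t
    using Fc[of t] pos[OF that] that Rge[of t] A4(1) by (auto simp: F_def)
  define G where "G t = S t * exp ((\<beta> / \<gamma>) * R t)" for t
  have cG: "continuous_on {0..} G" unfolding G_def using cont
    by (intro continuous_intros) auto
  have dG: "(G has_real_derivative 0) (at t)" if "t > 0" for t
  proof -
    have "(G has_real_derivative ((- \<beta> * S t * I t) * exp ((\<beta> / \<gamma>) * R t) + S t * (exp ((\<beta> / \<gamma>) * R t) * ((\<beta> / \<gamma>) * (\<gamma> * I t))))) (at t)"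
      unfolding G_def[abs_def] using dS[OF that] dR[OF that]
      by (intro derivative_eq_intros) auto
    thus ?thesis using gp by (simp add: field_simps)
  qed
  define K where "K = S0 * exp ((\<beta> / \<gamma>) * R0)"
  define U where "U t = exp (- (\<beta> / \<gamma>) * R t)" for t
  define u0 where "u0 = exp (- (\<beta> / \<gamma>) * R0)"
  have SK: "S t = K * U t" if "t \<ge> 0" for t
  proof -
    have "G t = G 0"
    proof (cases "t = 0")
      case False
      thus ?thesis using mvt0[OF cG dG, of 0 t] that by auto
    qed simp
    hence "S t * exp ((\<beta> / \<gamma>) * R t) = K" using init by (simp add: G_def K_def)
    hence "S t = K * exp (- ((\<beta> / \<gamma>) * R t))" by (simp add: exp_minus field_simps)
    thus ?thesis by (simp add: U_def)
  qed
  have Rle0: "R t \<le> N" if "t \<ge> 0" for t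
    using Rle[of t] Rle[of 1] Rmono[of 0 1] that init by (cases "t = 0") auto
  define Rinf where "Rinf = Sup (R ` {0..})"
  have bddR: "bdd_above (R ` {0..})" using Rle0 by (auto intro!: bdd_aboveI)
  have RleRinf: "R t \<le> Rinf" if "t \<ge> 0" for t
    unfolding Rinf_def using bddR that by (intro cSup_upper) auto
  have RltRinf: "R t < Rinf" if "t \<ge> 0" for t
    using Rmono[of t "t+1"] RleRinf[of "t+1"] that by auto
  have Rlim: "(R \<longlongrightarrow> Rinf) at_top"
  proof (rule order_tendstoI)
    fix y assume "y < Rinf"
    then obtain t0 where t0: "t0 \<ge> 0" "y < R t0"
      unfolding Rinf_def using bddR by (subst (asm) less_cSup_iff) auto
    have "eventually (\<lambda>t::real. t \<ge> t0) at_top" by (rule eventually_ge_at_top)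
    thus "eventually (\<lambda>t. y < R t) at_top"
    proof (rule eventually_mono)
      fix t assume "t0 \<le> t"
      thus "y < R t" using Rmono[of t0 t] t0 by (cases "t = t0") auto
    qed
  next
    fix y assume "Rinf < y"
    have "eventually (\<lambda>t::real. t \<ge> 0) at_top" by (rule eventually_ge_at_top)
    thus "eventually (\<lambda>t. R t < y) at_top"
      by (rule eventually_mono) (use RleRinf \<open>Rinf < y\<close> in force)
  qed
  define a where "a = exp (- (\<beta> / \<gamma>) * Rinf)"
  have Umono: "U t < U s" if "0 \<le> s" "s < t" for s t
    using Rmono[OF that] bp gp by (simp add: U_def divide_strict_right_mono)
  have Ugta: "a < U t" if "t \<ge> 0" for t
    using RltRinf[OF that] bp gp by (simp add: U_def a_def divide_strict_right_mono)
  have U0: "U 0 = u0" using init by (simp add: U_def u0_def)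
  have Ule: "U t \<le> u0" if "t \<ge> 0" for t
    using Umono[of 0 t] that U0 by (cases "t = 0") auto
  have au0: "a < u0" using Ugta[of 0] U0 by simp
  have cU: "continuous_on {0..} U" unfolding U_def using cont(4) by (intro continuous_intros)
  have Ulim: "(U \<longlongrightarrow> a) at_top" unfolding U_def a_def
    by (intro tendsto_intros Rlim)
  have Upos: "U t > 0" for t by (simp add: U_def)
  have apos: "a > 0" by (simp add: a_def)
  have Usmall: "\<exists>n\<ge>0. U n < c" if "a < c" for c
  proof -
    have "eventually (\<lambda>t. U t < c) at_top" using order_tendstoD(2)[OF Ulim that] .
    moreover have "eventually (\<lambda>t::real. t \<ge> 0) at_top" by (rule eventually_ge_at_top)
    ultimately have "eventually (\<lambda>t. t \<ge> 0 \<and> U t < c) at_top" by eventually_elim auto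
    then obtain N0 where "\<forall>t\<ge>N0. t \<ge> 0 \<and> U t < c" unfolding eventually_at_top_linorder by blast
    thus ?thesis by (metis max.cobounded1 max.cobounded2)
  qed
  have Usurj: "\<exists>t\<ge>0. U t = u" if au: "a < u" "u \<le> u0" for u
  proof -
    obtain n where n: "n \<ge> 0" "U n < u" using Usmall[OF au(1)] by blast
    have "continuous_on {0..n} U" by (rule continuous_on_subset[OF cU]) auto
    thus ?thesis using IVT2'[of U n u 0] n au U0 by force
  qed
  define T where "T u = (THE t. t \<ge> 0 \<and> U t = u)" for u
  have Uinj: "s = t" if "s \<ge> 0" "t \<ge> 0" "U s = U t" for s t
    using Umono[of s t] Umono[of t s] that by (cases s t rule: linorder_cases) auto
  have TU: "T (U t) = t" if "t \<ge> 0" for t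
    unfolding T_def by (rule the_equality) (use that Uinj in auto)
  have UT: "T u \<ge> 0 \<and> U (T u) = u" if au: "a < u" "u \<le> u0" for u
  proof -
    obtain t where "t \<ge> 0" "U t = u" using Usurj[OF au] by blast
    thus ?thesis using TU by auto
  qed
  have Tmono: "T v < T u" if uv: "a < u" "u < v" "v \<le> u0" for u v
  proof (rule ccontr)
    assume "\<not> T v < T u"
    hence "T u \<le> T v" by simp
    hence "U (T v) \<le> U (T u)" using Umono[of "T u" "T v"] UT[of u] uv by (cases "T u = T v") auto
    thus False using UT[of u] UT[of v] uv by auto
  qed
  have contTc: "continuous_on {c..u0} T" if c: "a < c" "c \<le> u0" for c
  proof -
    obtain n where n: "n \<ge> 0" "U n < c" using Usmall[OF c(1)] by blast
    have "continuous_on {0..n} U" by (rule continuous_on_subset[OF cU]) auto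
    hence "continuous_on (U ` {0..n}) T" by (rule continuous_on_inv) (auto simp: TU)
    moreover have "{c..u0} \<subseteq> U ` {0..n}"
    proof
      fix v assume v: "v \<in> {c..u0}"
      hence v': "a < v" "v \<le> u0" using c by auto
      have "T v \<le> n"
      proof (rule ccontr)
        assume "\<not> T v \<le> n"
        hence "U (T v) < U n" using Umono[of n "T v"] n by auto
        thus False using UT[OF v'] n v by auto
      qed
      thus "v \<in> U ` {0..n}" using UT[OF v'] by (metis atLeastAtMost_iff image_eqI)
    qed
    ultimately show ?thesis by (rule continuous_on_subset)
  qed
  have contT: "continuous_on {a<..u0} T" by (rule cont_left_open) (use contTc in auto)
  have contT': "continuous_on {a<..<u0} T" by (rule continuous_on_subset[OF contT]) auto
  have isContT: "isCont T u" if "a < u" "u < u0" for u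
    using contT' that by (simp add: continuous_on_eq_continuous_at)
  have T0: "T u0 = 0" using TU[of 0] U0 by simp
  have Tpos: "T u > 0" if "a < u" "u < u0" for u
    using Tmono[of u u0] that T0 by auto
  have dU: "(U has_real_derivative (- (\<beta> * I t * U t))) (at t)" if "t > 0" for t
  proof -
    have "(U has_real_derivative (exp (- (\<beta> / \<gamma>) * R t) * (- (\<beta> / \<gamma>) * (\<gamma> * I t)))) (at t)"
      unfolding U_def[abs_def] using dR[OF that] by (intro derivative_eq_intros) auto
    thus ?thesis using gp by (simp add: U_def mult.commute)
  qed
  have dT: "(T has_real_derivative inverse (- (\<beta> * I (T u) * u))) (at u)" if u: "a < u" "u < u0" for u
  proof -
    have "(U has_real_derivative (- (\<beta> * I (T u) * u))) (at (T u))"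
      using dU[OF Tpos[OF u]] UT[of u] u by simp
    moreover have "- (\<beta> * I (T u) * u) \<noteq> 0" using pos[OF Tpos[OF u]] bp u apos by auto
    ultimately show ?thesis
      by (rule DERIV_inverse_function[where a=a and b=u0]) (use u UT isContT in auto)
  qed
  have Ilim: "(I \<longlongrightarrow> 0) at_top"
  proof (rule tendstoI)
    fix e :: real assume e: "e > 0"
    define M where "M = (\<delta> + \<gamma>) * N"
    have M: "M > 0" using dp gp Npos by (simp add: M_def)
    define h where "h = e / (2 * M)"
    have h: "h > 0" using e M by (simp add: h_def)
    have hM: "h * M = e / 2" using M by (simp add: h_def)
    have "filterlim (\<lambda>t. t + h) at_top at_top"
      by (subst add.commute) (rule filterlim_tendsto_add_at_top[OF tendsto_const filterlim_ident])
    hence "((\<lambda>t. R (t + h)) \<longlongrightarrow> Rinf) at_top" by (rule filterlim_compose[OF Rlim])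
    hence "((\<lambda>t. R (t + h) - R t) \<longlongrightarrow> Rinf - Rinf) at_top" by (intro tendsto_diff Rlim)
    hence "eventually (\<lambda>t. R (t + h) - R t < \<gamma> * h * (e / 2)) at_top"
      using gp h e by (intro order_tendstoD(2)) auto
    moreover have "eventually (\<lambda>t::real. t > 0) at_top" by (rule eventually_gt_at_top)
    ultimately show "eventually (\<lambda>t. dist (I t) 0 < e) at_top"
    proof eventually_elim
      case (elim t)
      obtain z where z: "t < z" "z < t + h" "R (t + h) - R t = (t + h - t) * (\<gamma> * I z)"
        using mvt0[OF cont(4) dR, of t "t + h"] elim h by auto
      have "h * (\<gamma> * I z) < h * (\<gamma> * (e / 2))" using z elim by (simp add: algebra_simps)
      hence Iz: "I z < e / 2" using h gp by simp
      obtain w where w: "t < w" "w < z" "I z - I t = (z - t) * (\<delta> * E w - \<gamma> * I w)"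
        using mvt0[OF cont(3) dI, of t z] elim z by auto
      have wp: "w > 0" using w elim by simp
      have "\<delta> * E w - \<gamma> * I w \<ge> - M"
      proof -
        have "\<gamma> * I w \<le> \<gamma> * N" using Ebd(2)[OF wp] gp by simp
        moreover have "\<delta> * E w \<ge> 0" using pos[OF wp] dp by simp
        moreover have "\<gamma> * N \<le> M" using dp Npos by (simp add: M_def algebra_simps)
        ultimately show ?thesis by linarith
      qed
      hence "(z - t) * (\<delta> * E w - \<gamma> * I w) \<ge> (z - t) * (- M)" using z by (intro mult_left_mono) auto
      moreover have "(z - t) * M \<le> h * M" using z M by (intro mult_right_mono) auto
      ultimately have "I t \<le> I z + h * M" using w by (simp add: algebra_simps)
      hence "I t < e" using Iz hM by simp
      thus ?case using pos[OF elim(2)] by simp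
    qed
  qed
  define \<psi> where "\<psi> u = \<beta> * I (T u)" for u
  define \<psi>' where "\<psi>' u = \<beta> * ((\<delta> * E (T u) - \<gamma> * I (T u)) * inverse (- (\<beta> * I (T u) * u)))" for u
  define \<phi> where "\<phi> u = integral {u..u0} (\<lambda>\<xi>. 1 / (\<xi> * \<psi> \<xi>))" for u
  have Tim: "T ` {a<..u0} \<subseteq> {0..}" using UT by auto
  have cIT: "continuous_on {a<..u0} (\<lambda>u. I (T u))"
    using continuous_on_compose2[OF cont(3) contT Tim] .
  have cET: "continuous_on {a<..u0} (\<lambda>u. E (T u))"
    using continuous_on_compose2[OF cont(2) contT Tim] .
  have ITpos: "I (T u) > 0" if "a < u" "u \<le> u0" for u
  proof (cases "T u = 0")
    case True thus ?thesis using init A1 by simp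
  next
    case False thus ?thesis using pos[of "T u"] UT[OF that] by auto
  qed
  have cpsi: "continuous_on {a<..u0} \<psi>" unfolding \<psi>_def by (intro continuous_intros cIT)
  have psipos: "\<forall>u\<in>{a<..u0}. \<psi> u > 0" using ITpos bp by (auto simp: \<psi>_def)
  have dpsi: "\<forall>u\<in>{a<..<u0}. (\<psi> has_real_derivative \<psi>' u) (at u)"
  proof
    fix u assume u: "u \<in> {a<..<u0}"
    have "((\<lambda>u. I (T u)) has_real_derivative ((\<delta> * E (T u) - \<gamma> * I (T u)) * inverse (- (\<beta> * I (T u) * u)))) (at u)"
      using DERIV_chain2[OF dI[OF Tpos] dT] u by auto
    thus "(\<psi> has_real_derivative \<psi>' u) (at u)" unfolding \<psi>_def[abs_def] \<psi>'_def by (rule DERIV_cmult)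
  qed
  have cpsi'0: "continuous_on {a<..u0} \<psi>'" unfolding \<psi>'_def
    using ITpos apos bp by (intro continuous_intros cIT cET) (auto, metis less_irrefl)
  have cpsi': "continuous_on {a<..<u0} \<psi>'" by (rule continuous_on_subset[OF cpsi'0]) auto
  have Rln: "R (T u) = - (\<gamma> / \<beta>) * ln u" if "a < u" "u \<le> u0" for u
  proof -
    have "u = exp (- (\<beta> / \<gamma>) * R (T u))" using UT[OF that] by (simp add: U_def)
    hence "ln u = ln (exp (- (\<beta> / \<gamma>) * R (T u)))" by simp
    hence "ln u = - (\<beta> / \<gamma>) * R (T u)" by (simp only: ln_exp)
    thus ?thesis using bp gp by (simp add: field_simps)
  qed
  have SKu: "S (T u) = K * u" if "a < u" "u \<le> u0" for u
    using SK[of "T u"] UT[OF that] by simp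
  have FN: "S (T u) + E (T u) + I (T u) + R (T u) = N" if "a < u" "u \<le> u0" for u
    using Fc[of "T u"] UT[OF that] by (simp add: F_def)
  have abel: "\<forall>u\<in>{a<..<u0}. \<psi>' u * \<psi> u - ((\<gamma> + \<delta>) / u) * \<psi> u
            = - \<delta> * ((\<beta> * N - \<beta> * K * u + \<gamma> * ln u) / u)"
  proof
    fix u assume u: "u \<in> {a<..<u0}"
    hence u': "a < u" "u \<le> u0" by auto
    have up: "u > 0" using u apos by simp
    have Ip: "I (T u) > 0" using ITpos[OF u'] .
    have lnu: "\<gamma> * ln u = - \<beta> * R (T u)" using Rln[OF u'] bp gp by (simp add: field_simps)
    have "\<beta> * N - \<beta> * K * u + \<gamma> * ln u = \<beta> * (E (T u) + I (T u))"
    proof -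
      have eq: "N = K * u + E (T u) + I (T u) + R (T u)" using FN[OF u'] SKu[OF u'] by simp
      have "\<beta> * N = \<beta> * (K * u + E (T u) + I (T u) + R (T u))" by (subst eq) (rule refl)
      thus ?thesis using lnu by (simp add: algebra_simps)
    qed
    thus "\<psi>' u * \<psi> u - ((\<gamma> + \<delta>) / u) * \<psi> u
            = - \<delta> * ((\<beta> * N - \<beta> * K * u + \<gamma> * ln u) / u)"
      using up Ip bp unfolding \<psi>'_def \<psi>_def by (simp add: field_simps)
  qed
  have psiu0: "\<psi> u0 = \<beta> * I0" using T0 init by (simp add: \<psi>_def)
  have Tlim: "filterlim T at_top (at_right a)"
    unfolding filterlim_at_top
  proof
    fix Z :: real
    define n where "n = max Z 0"
    have n: "n \<ge> 0" "Z \<le> n" by (auto simp: n_def)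
    have "eventually (\<lambda>u. u < U n) (at_right a)"
      using Ugta[OF n(1)] unfolding eventually_at_right_field by blast
    moreover have "eventually (\<lambda>u. a < u) (at_right a)" by (rule eventually_at_right_less)
    ultimately show "eventually (\<lambda>u. Z \<le> T u) (at_right a)"
    proof eventually_elim
      case (elim u)
      have u': "a < u" "u \<le> u0" using elim Ule[OF n(1)] by auto
      have "n \<le> T u"
      proof (rule ccontr)
        assume "\<not> n \<le> T u"
        hence "U n < U (T u)" using Umono[of "T u" n] UT[OF u'] by auto
        thus False using UT[OF u'] elim by auto
      qed
      thus ?case using n by simp
    qed
  qed
  have psilim: "(\<psi> \<longlongrightarrow> 0) (at_right a)"
  proof -
    have "((\<lambda>u. \<beta> * I (T u)) \<longlongrightarrow> \<beta> * 0) (at_right a)"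
      by (intro tendsto_mult tendsto_const filterlim_compose[OF Ilim Tlim])
    thus ?thesis by (simp add: \<psi>_def[abs_def])
  qed
  have phiT: "\<phi> u = T u" if u: "a < u" "u \<le> u0" for u
  proof -
    have "((\<lambda>\<xi>. 1 / (\<xi> * \<psi> \<xi>)) has_integral ((\<lambda>v. - T v) u0 - (\<lambda>v. - T v) u)) {u..u0}"
    proof (rule fundamental_theorem_of_calculus_interior)
      show "u \<le> u0" using u by simp
      show "continuous_on {u..u0} (\<lambda>v. - T v)"
        using contTc[OF u] by (intro continuous_intros)
      fix x assume x: "x \<in> {u<..<u0}"
      hence x': "a < x" "x < u0" using u by auto
      have "((\<lambda>v. - T v) has_real_derivative - inverse (- (\<beta> * I (T x) * x))) (at x)"
        using dT[OF x'] by (rule DERIV_minus)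
      moreover have "- inverse (- (\<beta> * I (T x) * x)) = 1 / (x * \<psi> x)"
        by (simp add: \<psi>_def field_simps)
      ultimately show "((\<lambda>v. - T v) has_vector_derivative 1 / (x * \<psi> x)) (at x)"
        by (simp add: has_real_derivative_iff_has_vector_derivative)
    qed
    thus ?thesis using T0 by (simp add: \<phi>_def integral_unique)
  qed
  have Eform: "K * integral {u..u0} (\<lambda>v. exp (\<delta> * T v)) = E (T u) * exp (\<delta> * T u) - E0"
    if u: "a < u" "u \<le> u0" for u
  proof -
    define Gf where "Gf v = E (T v) * exp (\<delta> * T v)" for v
    have "((\<lambda>v. - K * exp (\<delta> * T v)) has_integral (Gf u0 - Gf u)) {u..u0}"
    proof (rule fundamental_theorem_of_calculus_interior)
      show "u \<le> u0" using u by simp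
      have "continuous_on {u..u0} (\<lambda>v. E (T v))"
        using continuous_on_compose2[OF cont(2) contTc[OF u]] UT u by force
      thus "continuous_on {u..u0} Gf"
        unfolding Gf_def using contTc[OF u] by (intro continuous_intros)
      fix x assume x: "x \<in> {u<..<u0}"
      hence x': "a < x" "x < u0" using u by auto
      have tp: "T x > 0" using Tpos[OF x'] .
      have Ip: "I (T x) > 0" using pos[OF tp] by simp
      have xp: "x > 0" using x' apos by simp
      have d1: "((\<lambda>v. E (T v)) has_real_derivative (\<beta> * S (T x) * I (T x) - \<delta> * E (T x)) * inverse (- (\<beta> * I (T x) * x))) (at x)"
        using DERIV_chain2[OF dE[OF tp] dT[OF x']] .
      have d2: "((\<lambda>v. exp (\<delta> * T v)) has_real_derivative exp (\<delta> * T x) * (\<delta> * inverse (- (\<beta> * I (T x) * x)))) (at x)"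
        using DERIV_chain2[OF DERIV_exp DERIV_cmult[OF dT[OF x']]] .
      have "(Gf has_real_derivative
          ((\<beta> * S (T x) * I (T x) - \<delta> * E (T x)) * inverse (- (\<beta> * I (T x) * x))) * exp (\<delta> * T x)
          + exp (\<delta> * T x) * (\<delta> * inverse (- (\<beta> * I (T x) * x))) * E (T x)) (at x)"
        unfolding Gf_def[abs_def]
        using DERIV_mult[OF d1 d2] by simp
      moreover have "((\<beta> * S (T x) * I (T x) - \<delta> * E (T x)) * inverse (- (\<beta> * I (T x) * x))) * exp (\<delta> * T x)
          + exp (\<delta> * T x) * (\<delta> * inverse (- (\<beta> * I (T x) * x))) * E (T x) = - K * exp (\<delta> * T x)"
        using SKu[of x] x' Ip xp bp by (simp add: field_simps)
      ultimately show "(Gf has_vector_derivative - K * exp (\<delta> * T x)) (at x)"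
        by (simp add: has_real_derivative_iff_has_vector_derivative)
    qed
    hence "integral {u..u0} (\<lambda>v. - K * exp (\<delta> * T v)) = Gf u0 - Gf u" by (rule integral_unique)
    hence "- K * integral {u..u0} (\<lambda>v. exp (\<delta> * T v)) = Gf u0 - Gf u" by simp
    moreover have "Gf u0 = E0" using T0 init by (simp add: Gf_def)
    ultimately show ?thesis by (simp add: Gf_def)
  qed
  have reps: "\<forall>u\<in>{a<..u0}.
          S (\<phi> u) = K * u \<and>
          E (\<phi> u) = E0 * exp (- \<delta> * \<phi> u)
                     + K * exp (- \<delta> * \<phi> u) * integral {u..u0} (\<lambda>v. exp (\<delta> * \<phi> v)) \<and>
          I (\<phi> u) = N - K * u + (\<gamma> / \<beta>) * ln u - E0 * exp (- \<delta> * \<phi> u)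
                     - K * exp (- \<delta> * \<phi> u) * integral {u..u0} (\<lambda>v. exp (\<delta> * \<phi> v)) \<and>
          R (\<phi> u) = - (\<gamma> / \<beta>) * ln u"
  proof
    fix u assume "u \<in> {a<..u0}"
    hence u: "a < u" "u \<le> u0" by auto
    have J: "integral {u..u0} (\<lambda>v. exp (\<delta> * \<phi> v)) = integral {u..u0} (\<lambda>v. exp (\<delta> * T v))"
      by (rule integral_cong) (use phiT u in auto)
    define t where "t = T u"
    have pt: "\<phi> u = t" using phiT[OF u] by (simp add: t_def)
    have ee: "exp (- \<delta> * t) * exp (\<delta> * t) = 1" by (simp add: exp_add[symmetric])
    have KJ: "K * integral {u..u0} (\<lambda>v. exp (\<delta> * \<phi> v)) = E t * exp (\<delta> * t) - E0"
      using Eform[OF u] J by (simp add: t_def)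
    have Et: "E t = E0 * exp (- \<delta> * t) + K * exp (- \<delta> * t) * integral {u..u0} (\<lambda>v. exp (\<delta> * \<phi> v))"
    proof -
      have "E0 * exp (- \<delta> * t) + K * exp (- \<delta> * t) * integral {u..u0} (\<lambda>v. exp (\<delta> * \<phi> v))
          = exp (- \<delta> * t) * (E0 + K * integral {u..u0} (\<lambda>v. exp (\<delta> * \<phi> v)))"
        by (simp add: algebra_simps)
      also have "\<dots> = E t * (exp (- \<delta> * t) * exp (\<delta> * t))" using KJ by simp
      finally show ?thesis using ee by simp
    qed
    have St: "S t = K * u" using SKu[OF u] by (simp add: t_def)
    have Rt: "R t = - (\<gamma> / \<beta>) * ln u" using Rln[OF u] by (simp add: t_def)
    have Ft: "S t + E t + I t + R t = N" using FN[OF u] by (simp add: t_def)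
    have It: "I t = N - K * u + (\<gamma> / \<beta>) * ln u - E t" using Ft St Rt by simp
    show "S (\<phi> u) = K * u \<and>
          E (\<phi> u) = E0 * exp (- \<delta> * \<phi> u)
                     + K * exp (- \<delta> * \<phi> u) * integral {u..u0} (\<lambda>v. exp (\<delta> * \<phi> v)) \<and>
          I (\<phi> u) = N - K * u + (\<gamma> / \<beta>) * ln u - E0 * exp (- \<delta> * \<phi> u)
                     - K * exp (- \<delta> * \<phi> u) * integral {u..u0} (\<lambda>v. exp (\<delta> * \<phi> v)) \<and>
          R (\<phi> u) = - (\<gamma> / \<beta>) * ln u"
      unfolding pt using St Rt It Et by simp
  qed
  have main: "\<exists>\<psi> \<psi>'.
       continuous_on {a<..u0} \<psi> \<and> (\<forall>u\<in>{a<..u0}. \<psi> u > 0) \<and>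
       (\<forall>u\<in>{a<..<u0}. (\<psi> has_real_derivative \<psi>' u) (at u)) \<and>
       continuous_on {a<..<u0} \<psi>' \<and>
       (\<forall>u\<in>{a<..<u0}. \<psi>' u * \<psi> u - ((\<gamma> + \<delta>) / u) * \<psi> u
            = - \<delta> * ((\<beta> * N - \<beta> * K * u + \<gamma> * ln u) / u)) \<and>
       \<psi> u0 = \<beta> * I0 \<and>
       (\<psi> \<longlongrightarrow> 0) (at_right a) \<and>
       (let \<phi> = (\<lambda>u. integral {u..u0} (\<lambda>\<xi>. 1 / (\<xi> * \<psi> \<xi>))) in
        \<forall>u\<in>{a<..u0}.
          S (\<phi> u) = K * u \<and>
          E (\<phi> u) = E0 * exp (- \<delta> * \<phi> u)
                     + K * exp (- \<delta> * \<phi> u) * integral {u..u0} (\<lambda>v. exp (\<delta> * \<phi> v)) \<and>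
          I (\<phi> u) = N - K * u + (\<gamma> / \<beta>) * ln u - E0 * exp (- \<delta> * \<phi> u)
                     - K * exp (- \<delta> * \<phi> u) * integral {u..u0} (\<lambda>v. exp (\<delta> * \<phi> v)) \<and>
          R (\<phi> u) = - (\<gamma> / \<beta>) * ln u)"
    apply (rule exI[of _ \<psi>], rule exI[of _ \<psi>'])
    using cpsi psipos dpsi cpsi' abel psiu0 psilim reps unfolding Let_def \<phi>_def[abs_def] by blast
  show ?thesis
    using Rlim main unfolding a_def u0_def K_def Let_def by blast
qed

end
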